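(* For every $k\ge1$ there is $c>0$ such that the following holds. For every $n\ge k$ and every pair $w,u$ of functions from $[n]^{(k)}$ to $\mathbb{R}$, $$\mathbb{E}_\pi|\langle w_\pi,u\rangle| \ge c\, \gamma(w,u) \sqrt n,$$ where $\pi$ is a uniformly random permutation of $[n]$.
   Context: $[n]=\{1,\dots,n\}$; $V^{(k)}$ is the family of $k$-subsets of $V$; $\langle w,u\rangle=\sum_{e\in V^{(k)}}w(e)u(e)$; for a permutation $\pi$ of $V$, $w_\pi(e)=w(\pi^{-1}(e))$. Fix distinct $x,y\in V$ and let $\tau=(xy)$; then $\gamma(w,u)=\mathbb{E}_{\pi,\sigma}|\langle w_\pi,u_\sigma\rangle-\langle w_{\tau\pi},u_\sigma\rangle|$ with $\pi,\sigma$ independent uniformly random permutations of $V$ (this does not depend on the choice of $x,y$). *)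

theory Defs
  imports Complex_Main "HOL-Combinatorics.Permutations"
begin

definition ksubsets :: "'a set \<Rightarrow> nat \<Rightarrow> 'a set set" where
  "ksubsets V k = {e. e \<subseteq> V \<and> card e = k}"

definition inner_k :: "'a set \<Rightarrow> nat \<Rightarrow> ('a set \<Rightarrow> real) \<Rightarrow> ('a set \<Rightarrow> real) \<Rightarrow> real" where
  "inner_k V k w u = (\<Sum>e\<in>ksubsets V k. w e * u e)"

definition perm_act :: "('a \<Rightarrow> 'a) \<Rightarrow> ('a set \<Rightarrow> real) \<Rightarrow> ('a set \<Rightarrow> real)" where
  "perm_act p w = (\<lambda>e. w (inv p ` e))"

definition perms :: "'a set \<Rightarrow> ('a \<Rightarrow> 'a) set" where
  "perms V = {p. p permutes V}"

definition avg :: "'b set \<Rightarrow> ('b \<Rightarrow> real) \<Rightarrow> real" where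
  "avg S f = (\<Sum>s\<in>S. f s) / real (card S)"

definition gamma :: "'a set \<Rightarrow> nat \<Rightarrow> 'a \<Rightarrow> 'a \<Rightarrow> ('a set \<Rightarrow> real) \<Rightarrow> ('a set \<Rightarrow> real) \<Rightarrow> real" where
  "gamma V k x y w u =
     avg (perms V \<times> perms V)
       (\<lambda>(p, s). \<bar>inner_k V k (perm_act p w) (perm_act s u)
                 - inner_k V k (perm_act (transpose x y \<circ> p) w) (perm_act s u)\<bar>)"

end

theory Submission
  imports Defs "HOL-Analysis.Convex"
begin


definition cube :: "nat \<Rightarrow> (nat \<Rightarrow> bool) set" where
  "cube m = {\<epsilon>. \<forall>i\<ge>m. \<not> \<epsilon> i}"

definition flip :: "nat \<Rightarrow> (nat \<Rightarrow> bool) \<Rightarrow> (nat \<Rightarrow> bool)" where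
  "flip j \<epsilon> = \<epsilon>(j := \<not> \<epsilon> j)"

definition deg_le :: "nat \<Rightarrow> ((nat \<Rightarrow> bool) \<Rightarrow> real) \<Rightarrow> bool" where
  "deg_le k f \<longleftrightarrow> (\<exists>(I::nat set set) g J. finite I \<and>
     (\<forall>i\<in>I. finite (J i) \<and> card (J i) \<le> k \<and>
        (\<forall>\<epsilon> \<epsilon>'. (\<forall>j\<in>J i. \<epsilon> j = \<epsilon>' j) \<longrightarrow> g i \<epsilon> = g i \<epsilon>')) \<and>
     (\<forall>\<epsilon>. f \<epsilon> = (\<Sum>i\<in>I. g i \<epsilon>)))"

lemma deg_leI:
  fixes f :: "(nat \<Rightarrow> bool) \<Rightarrow> real" and g :: "nat set \<Rightarrow> (nat \<Rightarrow> bool) \<Rightarrow> real"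
  assumes "finite (I::nat set set)"
    and "\<forall>i\<in>I. finite (J i) \<and> card (J i) \<le> k \<and>
        (\<forall>\<epsilon> \<epsilon>'. (\<forall>j\<in>J i. \<epsilon> j = \<epsilon>' j) \<longrightarrow> g i \<epsilon> = g i \<epsilon>')"
    and "\<forall>\<epsilon>. f \<epsilon> = (\<Sum>i\<in>I. g i \<epsilon>)"
  shows "deg_le k f"
  unfolding deg_le_def
  apply (rule exI[where x=I])
  apply (rule exI[where x=g])
  apply (rule exI[where x=J])
  using assms by simp

lemma deg_leE:
  fixes f :: "(nat \<Rightarrow> bool) \<Rightarrow> real"
  assumes "deg_le k f"
  obtains I g J where "finite (I::nat set set)"
    "\<forall>i\<in>I. finite (J i) \<and> card (J i) \<le> k \<and>
        (\<forall>\<epsilon> \<epsilon>'. (\<forall>j\<in>J i. \<epsilon> j = \<epsilon>' j) \<longrightarrow> g i \<epsilon> = g i \<epsilon>')"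
    "\<forall>\<epsilon>. f \<epsilon> = (\<Sum>i\<in>I. g i \<epsilon>)"
  using assms unfolding deg_le_def by blast

lemma cube_0: "cube 0 = {\<lambda>_. False}"
  by (auto simp: cube_def)

lemma cube_Suc: "cube (Suc m) = cube m \<union> (\<lambda>\<epsilon>. \<epsilon>(m:=True)) ` cube m"
proof (intro equalityI subsetI)
  fix \<epsilon> assume e: "\<epsilon> \<in> cube (Suc m)"
  show "\<epsilon> \<in> cube m \<union> (\<lambda>\<epsilon>. \<epsilon>(m:=True)) ` cube m"
  proof (cases "\<epsilon> m")
    case True
    have "\<epsilon>(m:=False) \<in> cube m" using e by (auto simp: cube_def)
    moreover have "\<epsilon> = (\<epsilon>(m:=False))(m:=True)" using True by (simp add: fun_eq_iff)
    ultimately show ?thesis by blast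
  next
    case False
    then have "\<epsilon> \<in> cube m" using e by (auto simp: cube_def) (metis le_antisym not_less_eq_eq)
    then show ?thesis by blast
  qed
qed (auto simp: cube_def)

lemma finite_cube: "finite (cube m)"
  by (induction m) (auto simp: cube_0 cube_Suc)

lemma sum_cube_Suc:
  "sum h (cube (Suc m)) = (\<Sum>\<epsilon>\<in>cube m. h \<epsilon> + h (\<epsilon>(m:=True)))"
proof -
  have inj: "inj_on (\<lambda>\<epsilon>. \<epsilon>(m:=True)) (cube m)"
  proof (rule inj_onI)
    fix a b assume a: "a \<in> cube m" and b: "b \<in> cube m" and ab: "a(m:=True) = b(m:=True)"
    show "a = b"
    proof
      fix i show "a i = b i"
      proof (cases "i = m")
        case True then show ?thesis using a b by (auto simp: cube_def)
      next
        case False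
        then have "(a(m:=True)) i = (b(m:=True)) i" using ab by simp
        then show ?thesis using False by simp
      qed
    qed
  qed
  have disj: "cube m \<inter> (\<lambda>\<epsilon>. \<epsilon>(m:=True)) ` cube m = {}"
    by (auto simp: cube_def)
  have "sum h (cube (Suc m)) = sum h (cube m) + sum h ((\<lambda>\<epsilon>. \<epsilon>(m:=True)) ` cube m)"
    unfolding cube_Suc by (rule sum.union_disjoint) (auto simp: finite_cube disj)
  also have "sum h ((\<lambda>\<epsilon>. \<epsilon>(m:=True)) ` cube m) = (\<Sum>\<epsilon>\<in>cube m. h (\<epsilon>(m:=True)))"
    by (subst sum.reindex[OF inj]) simp
  finally show ?thesis by (simp only: sum.distrib)
qed

lemma card_cube: "card (cube m) = 2 ^ m"
proof (induction m)
  case 0 show ?case by (simp add: cube_0)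
next
  case (Suc m)
  have "card (cube (Suc m)) = (\<Sum>\<epsilon>\<in>cube m. (1::nat) + 1)"
    unfolding card_eq_sum by (rule sum_cube_Suc)
  then show ?case by (simp add: Suc)
qed

lemma cube_m_False: "\<epsilon> \<in> cube m \<Longrightarrow> \<epsilon> m = False"
  by (auto simp: cube_def)

lemma cube_upd_False: "\<epsilon> \<in> cube m \<Longrightarrow> \<epsilon>(m:=False) = \<epsilon>"
  by (auto simp: cube_def fun_eq_iff)

lemma flip_cube: "\<epsilon> \<in> cube m \<Longrightarrow> j < m \<Longrightarrow> flip j \<epsilon> \<in> cube m"
  by (auto simp: cube_def flip_def)

lemma deg_A:
  fixes f :: "(nat \<Rightarrow> bool) \<Rightarrow> real"
  assumes "deg_le k f"
  shows "deg_le k (\<lambda>\<epsilon>. (f (\<epsilon>(m:=False)) + f (\<epsilon>(m:=True))) / 2)"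
proof (rule deg_leE[OF assms])
  fix I :: "nat set set" and J :: "nat set \<Rightarrow> nat set" and g :: "nat set \<Rightarrow> (nat \<Rightarrow> bool) \<Rightarrow> real"
  assume I: "finite I" and
    gJ: "\<forall>i\<in>I. finite (J i) \<and> card (J i) \<le> k \<and>
        (\<forall>\<epsilon> \<epsilon>'. (\<forall>j\<in>J i. \<epsilon> j = \<epsilon>' j) \<longrightarrow> g i \<epsilon> = g i \<epsilon>')"
    and f: "\<forall>\<epsilon>. f \<epsilon> = (\<Sum>i\<in>I. g i \<epsilon>)"
  define g' where "g' i \<epsilon> = (g i (\<epsilon>(m:=False)) + g i (\<epsilon>(m:=True))) / 2" for i \<epsilon>
  have "\<forall>i\<in>I. finite (J i) \<and> card (J i) \<le> k \<and>
        (\<forall>\<epsilon> \<epsilon>'. (\<forall>j\<in>J i. \<epsilon> j = \<epsilon>' j) \<longrightarrow> g' i \<epsilon> = g' i \<epsilon>')"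
  proof (intro ballI conjI allI impI)
    fix i and \<epsilon> \<epsilon>' :: "nat \<Rightarrow> bool" assume i: "i \<in> I" and ee: "\<forall>j\<in>J i. \<epsilon> j = \<epsilon>' j"
    have "g i (\<epsilon>(m:=False)) = g i (\<epsilon>'(m:=False))" "g i (\<epsilon>(m:=True)) = g i (\<epsilon>'(m:=True))"
      using gJ i ee by auto
    then show "g' i \<epsilon> = g' i \<epsilon>'" by (simp add: g'_def)
  next
    fix i assume "i \<in> I" then show "finite (J i)" using gJ by blast
  next
    fix i assume "i \<in> I" then show "card (J i) \<le> k" using gJ by blast
  qed
  moreover have "\<forall>\<epsilon>. (f (\<epsilon>(m:=False)) + f (\<epsilon>(m:=True))) / 2 = (\<Sum>i\<in>I. g' i \<epsilon>)"
    using f by (simp add: g'_def sum_divide_distrib[symmetric] sum.distrib)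
  ultimately show ?thesis using I by (rule deg_leI[rotated])
qed

lemma deg_B_aux:
  fixes f :: "(nat \<Rightarrow> bool) \<Rightarrow> real" and g :: "nat set \<Rightarrow> (nat \<Rightarrow> bool) \<Rightarrow> real"
    and \<epsilon> :: "nat \<Rightarrow> bool"
  assumes "finite (I::nat set set)" and
    gJ: "\<forall>i\<in>I. finite (J i) \<and> card (J i) \<le> k \<and>
        (\<forall>\<epsilon> \<epsilon>'. (\<forall>j\<in>J i. \<epsilon> j = \<epsilon>' j) \<longrightarrow> g i \<epsilon> = g i \<epsilon>')"
    and f: "\<forall>\<epsilon>. f \<epsilon> = (\<Sum>i\<in>I. g i \<epsilon>)"
  shows "deg_le (k - 1) (\<lambda>\<epsilon>. (f (\<epsilon>(m:=True)) - f (\<epsilon>(m:=False))) / 2)"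
    and "k = 0 \<Longrightarrow> f (\<epsilon>(m:=True)) - f (\<epsilon>(m:=False)) = 0"
proof -
  note I = assms(1)
  define g' where "g' i \<epsilon> = (g i (\<epsilon>(m:=True)) - g i (\<epsilon>(m:=False))) / 2" for i \<epsilon>
  define J' where "J' i = (if m \<in> J i then J i - {m} else {})" for i
  have zero: "g' i \<epsilon> = 0" if "i \<in> I" "m \<notin> J i" for i \<epsilon>
  proof -
    have H: "\<forall>\<epsilon> \<epsilon>'. (\<forall>j\<in>J i. \<epsilon> j = \<epsilon>' j) \<longrightarrow> g i \<epsilon> = g i \<epsilon>'" using gJ that by blast
    have "\<forall>j\<in>J i. (\<epsilon>(m:=True)) j = (\<epsilon>(m:=False)) j" using that by auto
    then have "g i (\<epsilon>(m:=True)) = g i (\<epsilon>(m:=False))" using H by blast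
    then show ?thesis by (simp add: g'_def)
  qed
  have "\<forall>i\<in>I. finite (J' i) \<and> card (J' i) \<le> k - 1 \<and>
        (\<forall>\<epsilon> \<epsilon>'. (\<forall>j\<in>J' i. \<epsilon> j = \<epsilon>' j) \<longrightarrow> g' i \<epsilon> = g' i \<epsilon>')"
  proof (intro ballI conjI allI impI)
    fix i assume i: "i \<in> I"
    show "finite (J' i)" using gJ i by (auto simp: J'_def)
    show "card (J' i) \<le> k - 1" using gJ i by (auto simp: J'_def)
  next
    fix i and \<epsilon> \<epsilon>' :: "nat \<Rightarrow> bool" assume i: "i \<in> I" and ee: "\<forall>j\<in>J' i. \<epsilon> j = \<epsilon>' j"
    show "g' i \<epsilon> = g' i \<epsilon>'"
    proof (cases "m \<in> J i")
      case True
      have "g i (\<epsilon>(m:=False)) = g i (\<epsilon>'(m:=False))" "g i (\<epsilon>(m:=True)) = g i (\<epsilon>'(m:=True))"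
        using gJ i ee True by (auto simp: J'_def)
      then show ?thesis by (simp add: g'_def)
    next
      case False
      then show ?thesis using zero i by simp
    qed
  qed
  moreover have fB: "\<forall>\<epsilon>. (f (\<epsilon>(m:=True)) - f (\<epsilon>(m:=False))) / 2 = (\<Sum>i\<in>I. g' i \<epsilon>)"
    using f by (simp add: g'_def sum_subtractf[symmetric] sum_divide_distrib)
  ultimately show "deg_le (k - 1) (\<lambda>\<epsilon>. (f (\<epsilon>(m:=True)) - f (\<epsilon>(m:=False))) / 2)"
    using I by (rule deg_leI[rotated])
  assume k: "k = 0"
  have "\<forall>i\<in>I. g' i \<epsilon> = 0"
  proof
    fix i assume i: "i \<in> I"
    then have "J i = {}" using gJ k by auto
    then show "g' i \<epsilon> = 0" using zero i by simp
  qed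
  then show "f (\<epsilon>(m:=True)) - f (\<epsilon>(m:=False)) = 0" using fB by simp
qed

lemma deg_B:
  assumes "deg_le k f"
  shows "deg_le (k - 1) (\<lambda>\<epsilon>. (f (\<epsilon>(m:=True)) - f (\<epsilon>(m:=False))) / 2)"
  by (rule deg_leE[OF assms]) (rule deg_B_aux(1))

lemma deg_B0:
  assumes "deg_le 0 f"
  shows "f (\<epsilon>(m:=True)) = f (\<epsilon>(m:=False))"
proof -
  have "f (\<epsilon>(m:=True)) - f (\<epsilon>(m:=False)) = 0"
    by (rule deg_leE[OF assms]) (rule deg_B_aux(2), auto)
  then show ?thesis by simp
qed



lemma AB_split:
  fixes f :: "(nat \<Rightarrow> bool) \<Rightarrow> real"
  assumes "\<epsilon> \<in> cube m"
  shows "f \<epsilon> = (f (\<epsilon>(m:=False)) + f (\<epsilon>(m:=True))) / 2 - (f (\<epsilon>(m:=True)) - f (\<epsilon>(m:=False))) / 2"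
    and "f (\<epsilon>(m:=True)) = (f (\<epsilon>(m:=False)) + f (\<epsilon>(m:=True))) / 2 + (f (\<epsilon>(m:=True)) - f (\<epsilon>(m:=False))) / 2"
  using cube_upd_False[OF assms] by (simp_all add: field_simps)

lemma bonami:
  fixes f :: "(nat \<Rightarrow> bool) \<Rightarrow> real"
  assumes "deg_le k f"
  shows "2 ^ m * (\<Sum>\<epsilon>\<in>cube m. (f \<epsilon>) ^ 4) \<le> 9 ^ k * (\<Sum>\<epsilon>\<in>cube m. (f \<epsilon>) ^ 2) ^ 2"
  using assms
proof (induction m arbitrary: k f)
  case 0
  have "(f (\<lambda>_. False)) ^ 4 \<le> 9 ^ k * ((f (\<lambda>_. False)) ^ 2) ^ 2"
  proof -
    have "(f (\<lambda>_. False)) ^ 4 = 1 * ((f (\<lambda>_. False)) ^ 2) ^ 2" by (simp add: power_mult[symmetric])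
    also have "\<dots> \<le> 9 ^ k * ((f (\<lambda>_. False)) ^ 2) ^ 2"
      by (rule mult_right_mono) (auto simp: one_le_power)
    finally show ?thesis .
  qed
  then show ?case by (simp add: cube_0)
next
  case (Suc m)
  define A where "A \<epsilon> = (f (\<epsilon>(m:=False)) + f (\<epsilon>(m:=True))) / 2" for \<epsilon>
  define B where "B \<epsilon> = (f (\<epsilon>(m:=True)) - f (\<epsilon>(m:=False))) / 2" for \<epsilon>
  have dA: "deg_le k A" unfolding A_def by (rule deg_A[OF Suc.prems])
  have dB: "deg_le (k - 1) B" unfolding B_def by (rule deg_B[OF Suc.prems])
  define a4 where "a4 = (\<Sum>\<epsilon>\<in>cube m. (A \<epsilon>) ^ 4)"
  define b4 where "b4 = (\<Sum>\<epsilon>\<in>cube m. (B \<epsilon>) ^ 4)"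
  define a2 where "a2 = (\<Sum>\<epsilon>\<in>cube m. (A \<epsilon>) ^ 2)"
  define b2 where "b2 = (\<Sum>\<epsilon>\<in>cube m. (B \<epsilon>) ^ 2)"
  define ab where "ab = (\<Sum>\<epsilon>\<in>cube m. (A \<epsilon>) ^ 2 * (B \<epsilon>) ^ 2)"
  define N :: real where "N = 2 ^ m"
  have N0: "N > 0" by (simp add: N_def)
  have s4: "(\<Sum>\<epsilon>\<in>cube (Suc m). (f \<epsilon>) ^ 4) = 2 * a4 + 12 * ab + 2 * b4"
  proof -
    have "(\<Sum>\<epsilon>\<in>cube (Suc m). (f \<epsilon>) ^ 4) = (\<Sum>\<epsilon>\<in>cube m. (A \<epsilon> - B \<epsilon>) ^ 4 + (A \<epsilon> + B \<epsilon>) ^ 4)"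
      unfolding sum_cube_Suc A_def B_def
      by (rule sum.cong) (use AB_split in auto)
    also have "\<dots> = (\<Sum>\<epsilon>\<in>cube m. 2 * (A \<epsilon>) ^ 4 + 12 * ((A \<epsilon>) ^ 2 * (B \<epsilon>) ^ 2) + 2 * (B \<epsilon>) ^ 4)"
      by (rule sum.cong) (simp_all add: power4_eq_xxxx power2_eq_square algebra_simps)
    also have "\<dots> = 2 * a4 + 12 * ab + 2 * b4"
      by (simp add: a4_def ab_def b4_def sum.distrib sum_distrib_left)
    finally show ?thesis .
  qed
  have s2: "(\<Sum>\<epsilon>\<in>cube (Suc m). (f \<epsilon>) ^ 2) = 2 * a2 + 2 * b2"
  proof -
    have "(\<Sum>\<epsilon>\<in>cube (Suc m). (f \<epsilon>) ^ 2) = (\<Sum>\<epsilon>\<in>cube m. (A \<epsilon> - B \<epsilon>) ^ 2 + (A \<epsilon> + B \<epsilon>) ^ 2)"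
      unfolding sum_cube_Suc A_def B_def
      by (rule sum.cong) (use AB_split in auto)
    also have "\<dots> = (\<Sum>\<epsilon>\<in>cube m. 2 * (A \<epsilon>) ^ 2 + 2 * (B \<epsilon>) ^ 2)"
      by (rule sum.cong) (simp_all add: power2_eq_square algebra_simps)
    also have "\<dots> = 2 * a2 + 2 * b2"
      by (simp add: a2_def b2_def sum.distrib sum_distrib_left)
    finally show ?thesis .
  qed
  have IA: "N * a4 \<le> 9 ^ k * a2 ^ 2" using Suc.IH[OF dA] by (simp add: N_def a4_def a2_def)
  have IB: "N * b4 \<le> 9 ^ (k - 1) * b2 ^ 2" using Suc.IH[OF dB] by (simp add: N_def b4_def b2_def)
  have a4p: "a4 \<ge> 0" "b4 \<ge> 0" "a2 \<ge> 0" "b2 \<ge> 0" "ab \<ge> 0"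
    by (auto simp: a4_def b4_def a2_def b2_def ab_def intro!: sum_nonneg)
  have CS: "ab ^ 2 \<le> a4 * b4"
  proof -
    have "ab ^ 2 = (\<Sum>\<epsilon>\<in>cube m. (A \<epsilon>) ^ 2 * (B \<epsilon>) ^ 2) ^ 2" by (simp add: ab_def)
    also have "\<dots> \<le> (\<Sum>\<epsilon>\<in>cube m. ((A \<epsilon>) ^ 2) ^ 2) * (\<Sum>\<epsilon>\<in>cube m. ((B \<epsilon>) ^ 2) ^ 2)"
      by (rule Cauchy_Schwarz_ineq_sum)
    also have "\<dots> = a4 * b4" by (simp add: a4_def b4_def power_mult[symmetric])
    finally show ?thesis .
  qed
  have main: "N * (a4 + 6 * ab + b4) \<le> 9 ^ k * (a2 + b2) ^ 2"
  proof (cases "k = 0")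
    case True
    have "B \<epsilon> = 0" for \<epsilon>
      using deg_B0[where f=f and m=m and \<epsilon>=\<epsilon>] Suc.prems True by (simp add: B_def)
    then have "b4 = 0" "ab = 0" "b2 = 0" by (simp_all add: b4_def ab_def b2_def)
    then show ?thesis using IA by simp
  next
    case False
    define Q :: real where "Q = 9 ^ (k - 1)"
    have Q9: "(9::real) ^ k = 9 * Q" using False by (simp add: Q_def power_eq_if)
    have Qp: "Q \<ge> 0" by (simp add: Q_def)
    have "(N * ab) ^ 2 = (N * a4) * (N * b4) - N^2 * (a4 * b4 - ab ^ 2)"
      by (simp add: power2_eq_square algebra_simps)
    also have "\<dots> \<le> (N * a4) * (N * b4)"
      using CS N0 by simp
    also have "\<dots> \<le> (9 * Q * a2 ^ 2) * (Q * b2 ^ 2)"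
      by (rule mult_mono) (use IA IB Q9 Q_def N0 a4p in auto)
    also have "\<dots> = (3 * Q * a2 * b2) ^ 2" by (simp add: power2_eq_square algebra_simps)
    finally have "N * ab \<le> 3 * Q * a2 * b2"
      by (rule power2_le_imp_le) (use Qp a4p in simp)
    then have "N * (a4 + 6 * ab + b4) \<le> 9 * Q * a2 ^ 2 + 18 * Q * a2 * b2 + Q * b2 ^ 2"
      using IA IB Q9 Q_def by (simp add: algebra_simps)
    also have "\<dots> \<le> 9 * Q * (a2 + b2) ^ 2"
      using Qp a4p by (simp add: power2_eq_square algebra_simps mult_nonneg_nonneg)
    finally show ?thesis using Q9 by simp
  qed
  have "2 ^ Suc m * (\<Sum>\<epsilon>\<in>cube (Suc m). (f \<epsilon>) ^ 4) = 4 * (N * (a4 + 6 * ab + b4))"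
    by (simp add: s4 N_def algebra_simps)
  also have "\<dots> \<le> 4 * (9 ^ k * (a2 + b2) ^ 2)" using main by simp
  also have "\<dots> = 9 ^ k * (\<Sum>\<epsilon>\<in>cube (Suc m). (f \<epsilon>) ^ 2) ^ 2"
    unfolding s2 by (simp add: power2_eq_square algebra_simps)
  finally show ?case .
qed


lemma flip_upd: "j \<noteq> m \<Longrightarrow> flip j (\<epsilon>(m:=b)) = (flip j \<epsilon>)(m:=b)"
  by (auto simp: flip_def fun_eq_iff)

lemma flip_m1: "\<epsilon> \<in> cube m \<Longrightarrow> flip m \<epsilon> = \<epsilon>(m:=True)"
  by (auto simp: flip_def cube_def fun_eq_iff)

lemma flip_m2: "\<epsilon> \<in> cube m \<Longrightarrow> flip m (\<epsilon>(m:=True)) = \<epsilon>"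
  by (auto simp: flip_def cube_def fun_eq_iff)

definition infl :: "nat \<Rightarrow> ((nat \<Rightarrow> bool) \<Rightarrow> real) \<Rightarrow> real" where
  "infl m f = (\<Sum>j<m. \<Sum>\<epsilon>\<in>cube m. (f \<epsilon> - f (flip j \<epsilon>)) ^ 2)"

lemma influence:
  fixes f :: "(nat \<Rightarrow> bool) \<Rightarrow> real"
  assumes "deg_le k f"
  shows "infl m f \<le> 4 * real k * (\<Sum>\<epsilon>\<in>cube m. (f \<epsilon>) ^ 2)"
  using assms
proof (induction m arbitrary: k f)
  case 0
  then show ?case by (simp add: infl_def cube_0)
next
  case (Suc m)
  define A where "A \<epsilon> = (f (\<epsilon>(m:=False)) + f (\<epsilon>(m:=True))) / 2" for \<epsilon>
  define B where "B \<epsilon> = (f (\<epsilon>(m:=True)) - f (\<epsilon>(m:=False))) / 2" for \<epsilon>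
  have dA: "deg_le k A" unfolding A_def by (rule deg_A[OF Suc.prems])
  have dB: "deg_le (k - 1) B" unfolding B_def by (rule deg_B[OF Suc.prems])
  define a2 where "a2 = (\<Sum>\<epsilon>\<in>cube m. (A \<epsilon>) ^ 2)"
  define b2 where "b2 = (\<Sum>\<epsilon>\<in>cube m. (B \<epsilon>) ^ 2)"
  have sp1: "f \<epsilon> = A \<epsilon> - B \<epsilon>" if "\<epsilon> \<in> cube m" for \<epsilon>
    using AB_split(1)[OF that, of f] by (simp add: A_def B_def)
  have sp2: "f (\<epsilon>(m:=True)) = A \<epsilon> + B \<epsilon>" if "\<epsilon> \<in> cube m" for \<epsilon>
    using AB_split(2)[OF that, of f] by (simp add: A_def B_def)
  have s2: "(\<Sum>\<epsilon>\<in>cube (Suc m). (f \<epsilon>) ^ 2) = 2 * a2 + 2 * b2"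
  proof -
    have "(\<Sum>\<epsilon>\<in>cube (Suc m). (f \<epsilon>) ^ 2) = (\<Sum>\<epsilon>\<in>cube m. (A \<epsilon> - B \<epsilon>) ^ 2 + (A \<epsilon> + B \<epsilon>) ^ 2)"
      unfolding sum_cube_Suc by (rule sum.cong) (simp_all add: sp1 sp2)
    also have "\<dots> = (\<Sum>\<epsilon>\<in>cube m. 2 * (A \<epsilon>) ^ 2 + 2 * (B \<epsilon>) ^ 2)"
      by (rule sum.cong) (simp_all add: power2_eq_square algebra_simps)
    also have "\<dots> = 2 * a2 + 2 * b2"
      by (simp add: a2_def b2_def sum.distrib sum_distrib_left)
    finally show ?thesis .
  qed
  have Tj: "(\<Sum>\<epsilon>\<in>cube (Suc m). (f \<epsilon> - f (flip j \<epsilon>)) ^ 2) =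
      2 * (\<Sum>\<epsilon>\<in>cube m. (A \<epsilon> - A (flip j \<epsilon>)) ^ 2) + 2 * (\<Sum>\<epsilon>\<in>cube m. (B \<epsilon> - B (flip j \<epsilon>)) ^ 2)"
    if j: "j < m" for j
  proof -
    have "(\<Sum>\<epsilon>\<in>cube (Suc m). (f \<epsilon> - f (flip j \<epsilon>)) ^ 2) =
      (\<Sum>\<epsilon>\<in>cube m. ((A \<epsilon> - B \<epsilon>) - (A (flip j \<epsilon>) - B (flip j \<epsilon>))) ^ 2
                   + ((A \<epsilon> + B \<epsilon>) - (A (flip j \<epsilon>) + B (flip j \<epsilon>))) ^ 2)"
      unfolding sum_cube_Suc
    proof (rule sum.cong)
      fix \<epsilon> assume e: "\<epsilon> \<in> cube m"
      have fe: "flip j \<epsilon> \<in> cube m" using flip_cube[OF e j] .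
      have "flip j (\<epsilon>(m:=True)) = (flip j \<epsilon>)(m:=True)" using j by (simp add: flip_upd)
      then show "(f \<epsilon> - f (flip j \<epsilon>))\<^sup>2 + (f (\<epsilon>(m := True)) - f (flip j (\<epsilon>(m := True))))\<^sup>2 =
        ((A \<epsilon> - B \<epsilon>) - (A (flip j \<epsilon>) - B (flip j \<epsilon>))) ^ 2
                   + ((A \<epsilon> + B \<epsilon>) - (A (flip j \<epsilon>) + B (flip j \<epsilon>))) ^ 2"
        using sp1[OF e] sp2[OF e] sp1[OF fe] sp2[OF fe] by simp
    qed simp
    also have "\<dots> = (\<Sum>\<epsilon>\<in>cube m. 2 * (A \<epsilon> - A (flip j \<epsilon>)) ^ 2 + 2 * (B \<epsilon> - B (flip j \<epsilon>)) ^ 2)"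
      by (rule sum.cong) (simp_all add: power2_eq_square algebra_simps)
    also have "\<dots> = 2 * (\<Sum>\<epsilon>\<in>cube m. (A \<epsilon> - A (flip j \<epsilon>)) ^ 2) + 2 * (\<Sum>\<epsilon>\<in>cube m. (B \<epsilon> - B (flip j \<epsilon>)) ^ 2)"
      by (simp add: sum.distrib sum_distrib_left)
    finally show ?thesis .
  qed
  have Tm: "(\<Sum>\<epsilon>\<in>cube (Suc m). (f \<epsilon> - f (flip m \<epsilon>)) ^ 2) = 8 * b2"
  proof -
    have "(\<Sum>\<epsilon>\<in>cube (Suc m). (f \<epsilon> - f (flip m \<epsilon>)) ^ 2) =
      (\<Sum>\<epsilon>\<in>cube m. 8 * (B \<epsilon>) ^ 2)"
      unfolding sum_cube_Suc
    proof (rule sum.cong)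
      fix \<epsilon> assume e: "\<epsilon> \<in> cube m"
      show "(f \<epsilon> - f (flip m \<epsilon>))\<^sup>2 + (f (\<epsilon>(m := True)) - f (flip m (\<epsilon>(m := True))))\<^sup>2 =
        8 * (B \<epsilon>) ^ 2"
        unfolding flip_m1[OF e] flip_m2[OF e] sp2[OF e] sp1[OF e]
        by (simp add: power2_eq_square algebra_simps)
    qed simp
    then show ?thesis by (simp add: b2_def sum_distrib_left)
  qed
  have "infl (Suc m) f = (\<Sum>j<m. \<Sum>\<epsilon>\<in>cube (Suc m). (f \<epsilon> - f (flip j \<epsilon>)) ^ 2) + 8 * b2"
    by (simp add: infl_def Tm)
  also have "(\<Sum>j<m. \<Sum>\<epsilon>\<in>cube (Suc m). (f \<epsilon> - f (flip j \<epsilon>)) ^ 2) = 2 * infl m A + 2 * infl m B"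
    by (simp add: Tj infl_def sum.distrib sum_distrib_left)
  finally have eq: "infl (Suc m) f = 2 * infl m A + 2 * infl m B + 8 * b2" .
  have IA: "infl m A \<le> 4 * real k * a2" using Suc.IH[OF dA] by (simp add: a2_def)
  have IB: "infl m B \<le> 4 * real (k - 1) * b2" using Suc.IH[OF dB] by (simp add: b2_def)
  have b2p: "b2 \<ge> 0" by (simp add: b2_def sum_nonneg)
  show ?case
  proof (cases "k = 0")
    case True
    have "B \<epsilon> = 0" for \<epsilon>
      using deg_B0[where f=f and m=m and \<epsilon>=\<epsilon>] Suc.prems True by (simp add: B_def)
    then have "infl m B = 0" "b2 = 0" by (simp_all add: infl_def b2_def)
    then show ?thesis using eq IA s2 True by simp
  next
    case False
    then have "real (k - 1) = real k - 1" by simp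
    then have IB': "2 * infl m B \<le> 8 * real k * b2 - 8 * b2"
      using IB by (simp add: algebra_simps)
    have IA': "2 * infl m A \<le> 8 * real k * a2" using IA by (simp add: mult.commute mult.left_commute)
    have "2 * infl m A + 2 * infl m B + 8 * b2 \<le> 8 * real k * a2 + 8 * (real k - 1) * b2 + 8 * b2"
      using IA' IB' by (simp add: algebra_simps)
    also have "\<dots> = 4 * real k * (2 * a2 + 2 * b2)" by (simp add: algebra_simps)
    finally show ?thesis using eq s2 by simp
  qed
qed


lemma holder_aux:
  fixes f :: "'a \<Rightarrow> real"
  shows "(\<Sum>x\<in>S. (f x)^2) ^ 3 \<le> (\<Sum>x\<in>S. \<bar>f x\<bar>) ^ 2 * (\<Sum>x\<in>S. (f x)^4)"
proof -
  define S1 where "S1 = (\<Sum>x\<in>S. \<bar>f x\<bar>)"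
  define S2 where "S2 = (\<Sum>x\<in>S. (f x)^2)"
  define S3 where "S3 = (\<Sum>x\<in>S. \<bar>f x\<bar>^3)"
  define S4 where "S4 = (\<Sum>x\<in>S. (f x)^4)"
  have S2p: "S2 \<ge> 0" by (simp add: S2_def sum_nonneg)
  have S1p: "S1 \<ge> 0" by (simp add: S1_def sum_nonneg)
  have S4p: "S4 \<ge> 0" by (simp add: S4_def sum_nonneg)
  have c1: "S2 ^ 2 \<le> S1 * S3"
  proof -
    have eq: "S2 = (\<Sum>x\<in>S. sqrt \<bar>f x\<bar> * (sqrt \<bar>f x\<bar> * \<bar>f x\<bar>))"
      unfolding S2_def
      by (rule sum.cong) (simp_all add: mult.assoc[symmetric] power2_eq_square abs_mult_self_eq)
    have "S2 ^ 2 \<le> (\<Sum>x\<in>S. (sqrt \<bar>f x\<bar>)^2) * (\<Sum>x\<in>S. (sqrt \<bar>f x\<bar> * \<bar>f x\<bar>)^2)"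
      unfolding eq by (rule Cauchy_Schwarz_ineq_sum)
    also have "(\<Sum>x\<in>S. (sqrt \<bar>f x\<bar>)^2) = S1"
      unfolding S1_def by (rule sum.cong) simp_all
    also have "(\<Sum>x\<in>S. (sqrt \<bar>f x\<bar> * \<bar>f x\<bar>)^2) = S3"
      unfolding S3_def
    proof (rule sum.cong)
      fix x
      have "(sqrt \<bar>f x\<bar> * \<bar>f x\<bar>)^2 = (sqrt \<bar>f x\<bar>)^2 * \<bar>f x\<bar>^2"
        by (simp add: power_mult_distrib)
      also have "\<dots> = \<bar>f x\<bar> * \<bar>f x\<bar>^2" by simp
      also have "\<dots> = \<bar>f x\<bar>^3" by (simp add: power2_eq_square power3_eq_cube)
      finally show "(sqrt \<bar>f x\<bar> * \<bar>f x\<bar>)^2 = \<bar>f x\<bar>^3" .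
    qed simp
    finally show ?thesis .
  qed
  have c2: "S3 ^ 2 \<le> S2 * S4"
  proof -
    have eq: "S3 = (\<Sum>x\<in>S. \<bar>f x\<bar> * (f x)^2)"
      unfolding S3_def by (rule sum.cong) (simp_all add: power2_eq_square power3_eq_cube abs_mult_self_eq)
    have "S3 ^ 2 \<le> (\<Sum>x\<in>S. \<bar>f x\<bar>^2) * (\<Sum>x\<in>S. ((f x)^2)^2)"
      unfolding eq by (rule Cauchy_Schwarz_ineq_sum)
    also have "\<dots> = S2 * S4"
      unfolding S2_def S4_def by (simp add: power_mult[symmetric])
    finally show ?thesis .
  qed
  have S3p: "S3 \<ge> 0" by (simp add: S3_def sum_nonneg)
  have "S2 ^ 4 = (S2^2)^2" by simp
  also have "\<dots> \<le> (S1 * S3)^2" by (rule power_mono[OF c1]) (simp add: S2p)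
  also have "\<dots> = S1^2 * S3^2" by (simp add: power_mult_distrib)
  also have "\<dots> \<le> S1^2 * (S2 * S4)" using c2 by (simp add: mult_left_mono)
  finally have *: "S2 ^ 4 \<le> S1^2 * S4 * S2" by (simp add: algebra_simps)
  show ?thesis
  proof (cases "S2 = 0")
    case True then show ?thesis using S1p S4p unfolding S2_def[symmetric] S1_def[symmetric] S4_def[symmetric] by simp
  next
    case False
    then have "S2 > 0" using S2p by simp
    have "S2 ^ 3 * S2 \<le> (S1^2 * S4) * S2" using * by (simp add: power_Suc2[symmetric] del: power_Suc)
    then have "S2 ^ 3 \<le> S1^2 * S4" using \<open>S2 > 0\<close> by simp
    then show ?thesis by (simp add: S1_def S2_def S4_def)
  qed
qed

lemma real_card_cube: "real (card (cube m)) = 2 ^ m"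
  by (simp add: card_cube)

lemma L1_bound:
  fixes f :: "(nat \<Rightarrow> bool) \<Rightarrow> real"
  assumes "deg_le k f"
  shows "(\<Sum>j<m. \<Sum>\<epsilon>\<in>cube m. \<bar>f \<epsilon> - f (flip j \<epsilon>)\<bar>) \<le> sqrt (4 * real k * real m * 9 ^ k) * (\<Sum>\<epsilon>\<in>cube m. \<bar>f \<epsilon>\<bar>)"
proof -
  define S1 where "S1 = (\<Sum>\<epsilon>\<in>cube m. \<bar>f \<epsilon>\<bar>)"
  define S2 where "S2 = (\<Sum>\<epsilon>\<in>cube m. (f \<epsilon>)^2)"
  define S4 where "S4 = (\<Sum>\<epsilon>\<in>cube m. (f \<epsilon>)^4)"
  define N :: real where "N = 2 ^ m"
  define L where "L = (\<Sum>j<m. \<Sum>\<epsilon>\<in>cube m. \<bar>f \<epsilon> - f (flip j \<epsilon>)\<bar>)"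
  have S2p: "S2 \<ge> 0" by (simp add: S2_def sum_nonneg)
  have S1p: "S1 \<ge> 0" by (simp add: S1_def sum_nonneg)
  have Np: "N > 0" by (simp add: N_def)
  have H: "S2 ^ 3 \<le> S1 ^ 2 * S4" unfolding S1_def S2_def S4_def by (rule holder_aux)
  have B: "N * S4 \<le> 9 ^ k * S2 ^ 2" unfolding N_def S4_def S2_def by (rule bonami[OF assms])
  have NS2: "N * S2 \<le> 9 ^ k * S1 ^ 2"
  proof (cases "S2 = 0")
    case True then show ?thesis by simp
  next
    case False
    then have pos: "S2 ^ 2 > 0" using S2p by simp
    have "(N * S2) * S2 ^ 2 = N * S2 ^ 3" by (simp add: power2_eq_square power3_eq_cube)
    also have "\<dots> \<le> N * (S1 ^ 2 * S4)" using H Np by simp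
    also have "\<dots> = S1 ^ 2 * (N * S4)" by simp
    also have "\<dots> \<le> S1 ^ 2 * (9 ^ k * S2 ^ 2)" using B by (simp add: mult_left_mono)
    also have "\<dots> = (9 ^ k * S1 ^ 2) * S2 ^ 2" by simp
    finally show ?thesis using pos by simp
  qed
  have I: "infl m f \<le> 4 * real k * S2" unfolding S2_def by (rule influence[OF assms])
  have Lsq: "L ^ 2 \<le> real m * N * infl m f"
  proof -
    have eq: "L = (\<Sum>p\<in>{..<m} \<times> cube m. 1 * \<bar>f (snd p) - f (flip (fst p) (snd p))\<bar>)"
      unfolding L_def by (simp add: sum.cartesian_product case_prod_unfold)
    have "L ^ 2 \<le> (\<Sum>p\<in>{..<m} \<times> cube m. 1 ^ 2) * (\<Sum>p\<in>{..<m} \<times> cube m. \<bar>f (snd p) - f (flip (fst p) (snd p))\<bar> ^ 2)"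
      unfolding eq by (rule Cauchy_Schwarz_ineq_sum)
    also have "(\<Sum>p\<in>{..<m} \<times> cube m. (1::real) ^ 2) = real m * N"
      by (simp add: card_cartesian_product card_cube N_def)
    also have "(\<Sum>p\<in>{..<m} \<times> cube m. \<bar>f (snd p) - f (flip (fst p) (snd p))\<bar> ^ 2) = infl m f"
      unfolding infl_def by (simp add: sum.cartesian_product case_prod_unfold)
    finally show ?thesis .
  qed
  have "real m * N * infl m f \<le> real m * N * (4 * real k * S2)"
    by (rule mult_left_mono[OF I]) (use Np in simp)
  then have "L ^ 2 \<le> real m * N * (4 * real k * S2)"
    using Lsq by linarith
  also have "\<dots> = 4 * real k * real m * (N * S2)" by (simp add: algebra_simps)
  also have "\<dots> \<le> 4 * real k * real m * (9 ^ k * S1 ^ 2)" using NS2 by (simp add: mult_left_mono)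
  also have "\<dots> = (sqrt (4 * real k * real m * 9 ^ k) * S1) ^ 2"
    by (simp add: power_mult_distrib)
  finally have "L ^ 2 \<le> (sqrt (4 * real k * real m * 9 ^ k) * S1) ^ 2" .
  then have "L \<le> sqrt (4 * real k * real m * 9 ^ k) * S1"
    by (rule power2_le_imp_le) (simp add: S1p)
  then show ?thesis by (simp add: L_def S1_def)
qed



definition Yf :: "nat set \<Rightarrow> nat \<Rightarrow> (nat set \<Rightarrow> real) \<Rightarrow> (nat set \<Rightarrow> real) \<Rightarrow> (nat \<Rightarrow> nat) \<Rightarrow> real" where
  "Yf V k w u q = (\<Sum>e\<in>ksubsets V k. w (q ` e) * u e)"

definition Gf :: "nat set \<Rightarrow> nat \<Rightarrow> (nat set \<Rightarrow> real) \<Rightarrow> (nat set \<Rightarrow> real) \<Rightarrow> nat \<Rightarrow> nat \<Rightarrow> real" where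
  "Gf V k w u a b = (\<Sum>q\<in>perms V. \<Sum>r\<in>perms V. \<bar>Yf V k w u r - Yf V k w u (transpose (q a) (q b) \<circ> r)\<bar>)"

lemma ksub_image:
  assumes "p permutes V"
  shows "(\<lambda>e. p ` e) ` ksubsets V k = ksubsets V k"
proof (intro equalityI subsetI)
  fix e' assume "e' \<in> (\<lambda>e. p ` e) ` ksubsets V k"
  then obtain e where e: "e \<in> ksubsets V k" and e': "e' = p ` e" by blast
  have "p ` e \<subseteq> V" using e permutes_image[OF assms] by (auto simp: ksubsets_def)
  moreover have "card (p ` e) = card e"
    by (rule card_image) (meson assms permutes_inj inj_on_subset subset_UNIV)
  ultimately show "e' \<in> ksubsets V k" using e e' by (simp add: ksubsets_def)
next
  fix e assume e: "e \<in> ksubsets V k"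
  have "inv p ` e \<subseteq> V" using e permutes_image[OF permutes_inv[OF assms]] by (auto simp: ksubsets_def)
  moreover have "card (inv p ` e) = card e"
    by (rule card_image) (meson assms permutes_inv permutes_inj inj_on_subset subset_UNIV)
  ultimately have "inv p ` e \<in> ksubsets V k" using e by (simp add: ksubsets_def)
  moreover have "e = p ` (inv p ` e)"
    by (simp add: image_comp permutes_inv_o(1)[OF assms])
  ultimately show "e \<in> (\<lambda>e. p ` e) ` ksubsets V k" by blast
qed

lemma sum_ksub_reindex:
  assumes "p permutes V"
  shows "(\<Sum>e\<in>ksubsets V k. h (p ` e)) = (\<Sum>e\<in>ksubsets V k. h e)"
proof -
  have inj: "inj_on (\<lambda>e. p ` e) (ksubsets V k)"
    by (rule inj_onI) (meson assms inj_image_eq_iff permutes_inj)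
  have "(\<Sum>e\<in>ksubsets V k. h e) = (\<Sum>e\<in>(\<lambda>e. p ` e) ` ksubsets V k. h e)"
    by (simp add: ksub_image[OF assms])
  also have "\<dots> = (\<Sum>e\<in>ksubsets V k. h (p ` e))"
    by (subst sum.reindex[OF inj]) simp
  finally show ?thesis by simp
qed

lemma avg_lhs:
  "(\<Sum>p\<in>perms V. \<bar>inner_k V k (perm_act p w) u\<bar>) = (\<Sum>q\<in>perms V. \<bar>Yf V k w u q\<bar>)"
proof -
  have "(\<Sum>p\<in>perms V. \<bar>inner_k V k (perm_act p w) u\<bar>) = (\<Sum>p\<in>perms V. \<bar>Yf V k w u (inv p)\<bar>)"
    by (simp add: inner_k_def perm_act_def Yf_def)
  also have "\<dots> = (\<Sum>q\<in>perms V. \<bar>Yf V k w u q\<bar>)"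
    unfolding perms_def
    by (rule sum_permutations_inverse[symmetric, where f="\<lambda>q. \<bar>Yf V k w u q\<bar>"])
  finally show ?thesis .
qed

lemma inner_pair:
  assumes "p permutes V" "s permutes V"
  shows "inner_k V k (perm_act p w) (perm_act s u) = Yf V k w u (inv p \<circ> s)"
proof -
  have "inner_k V k (perm_act p w) (perm_act s u) = (\<Sum>e\<in>ksubsets V k. w (inv p ` e) * u (inv s ` e))"
    by (simp add: inner_k_def perm_act_def)
  also have "\<dots> = (\<Sum>e\<in>ksubsets V k. w (inv p ` (s ` e)) * u (inv s ` (s ` e)))"
    by (rule sum_ksub_reindex[OF assms(2), symmetric, where h="\<lambda>e. w (inv p ` e) * u (inv s ` e)"])
  also have "\<dots> = Yf V k w u (inv p \<circ> s)"
    by (simp add: Yf_def image_comp permutes_inv_o(2)[OF assms(2)])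
  finally show ?thesis .
qed

lemma conj_transpose:
  assumes "q permutes V"
  shows "q \<circ> transpose x y \<circ> inv q = transpose (q x) (q y)"
proof -
  have b: "bij q" using permutes_bij[OF assms] .
  have "transpose (q x) (q y) \<circ> q = q \<circ> transpose x y"
    using transpose_comp_eq[OF b, of "q x" "q y"] by (simp add: bij_inv_eq_iff[OF b] inv_f_f[OF bij_is_inj[OF b]])
  then have "transpose (q x) (q y) \<circ> q \<circ> inv q = q \<circ> transpose x y \<circ> inv q" by simp
  then show ?thesis by (simp add: o_assoc[symmetric] permutes_inv_o(1)[OF assms])
qed

lemma gamma_eq:
  assumes xV: "x \<in> V" and yV: "y \<in> V"
  shows "gamma V k x y w u = Gf V k w u x y / (real (card (perms V)) * real (card (perms V)))"
proof -
  let ?P = "perms V"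
  let ?Y = "Yf V k w u"
  have tp: "transpose x y permutes V" by (rule permutes_swap_id[OF xV yV])
  define F where "F = (\<lambda>(p, s). \<bar>inner_k V k (perm_act p w) (perm_act s u)
                 - inner_k V k (perm_act (transpose x y \<circ> p) w) (perm_act s u)\<bar>)"
  have "(\<Sum>ps\<in>?P \<times> ?P. F ps) = (\<Sum>p\<in>?P. \<Sum>s\<in>?P. F (p, s))"
    by (simp add: sum.cartesian_product)
  also have "\<dots> = (\<Sum>p\<in>?P. \<Sum>s\<in>?P. \<bar>?Y (inv p \<circ> s) - ?Y (inv p \<circ> transpose x y \<circ> s)\<bar>)"
  proof (rule sum.cong[OF refl], rule sum.cong[OF refl])
    fix p s assume p: "p \<in> ?P" and s: "s \<in> ?P"
    have pp: "p permutes V" and ss: "s permutes V" using p s by (auto simp: perms_def)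
    have tpp: "transpose x y \<circ> p permutes V" by (rule permutes_compose[OF pp tp])
    have "inv (transpose x y \<circ> p) = inv p \<circ> transpose x y"
      by (simp add: o_inv_distrib permutes_bij[OF pp])
    then show "F (p, s) = \<bar>?Y (inv p \<circ> s) - ?Y (inv p \<circ> transpose x y \<circ> s)\<bar>"
      by (simp add: F_def inner_pair[OF pp ss] inner_pair[OF tpp ss] o_assoc)
  qed
  also have "\<dots> = (\<Sum>q\<in>?P. \<Sum>s\<in>?P. \<bar>?Y (q \<circ> s) - ?Y (q \<circ> transpose x y \<circ> s)\<bar>)"
    unfolding perms_def
    by (rule sum_permutations_inverse[symmetric, where f="\<lambda>q. \<Sum>s\<in>{p. p permutes V}. \<bar>?Y (q \<circ> s) - ?Y (q \<circ> transpose x y \<circ> s)\<bar>"])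
  also have "\<dots> = Gf V k w u x y"
    unfolding Gf_def
  proof (rule sum.cong[OF refl])
    fix q assume q: "q \<in> ?P"
    have qq: "q permutes V" using q by (simp add: perms_def)
    have "(\<Sum>s\<in>?P. \<bar>?Y (q \<circ> s) - ?Y (q \<circ> transpose x y \<circ> s)\<bar>)
        = (\<Sum>r\<in>?P. \<bar>?Y (q \<circ> (inv q \<circ> r)) - ?Y (q \<circ> transpose x y \<circ> (inv q \<circ> r))\<bar>)"
      unfolding perms_def
      by (rule setum_permutations_compose_left[OF permutes_inv[OF qq], where f="\<lambda>s. \<bar>?Y (q \<circ> s) - ?Y (q \<circ> transpose x y \<circ> s)\<bar>"])
    also have "\<dots> = (\<Sum>r\<in>?P. \<bar>?Y r - ?Y (transpose (q x) (q y) \<circ> r)\<bar>)"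
    proof (rule sum.cong[OF refl])
      fix r :: "nat \<Rightarrow> nat"
      have "q \<circ> (inv q \<circ> r) = r" by (simp add: o_assoc permutes_inv_o(1)[OF qq])
      moreover have "q \<circ> transpose x y \<circ> (inv q \<circ> r) = transpose (q x) (q y) \<circ> r"
        using conj_transpose[OF qq, of x y] by (simp add: o_assoc)
      ultimately show "\<bar>?Y (q \<circ> (inv q \<circ> r)) - ?Y (q \<circ> transpose x y \<circ> (inv q \<circ> r))\<bar> = \<bar>?Y r - ?Y (transpose (q x) (q y) \<circ> r)\<bar>"
        by simp
    qed
    finally show "(\<Sum>s\<in>?P. \<bar>?Y (q \<circ> s) - ?Y (q \<circ> transpose x y \<circ> s)\<bar>) = (\<Sum>r\<in>?P. \<bar>?Y r - ?Y (transpose (q x) (q y) \<circ> r)\<bar>)" .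
  qed
  finally have "(\<Sum>ps\<in>?P \<times> ?P. F ps) = Gf V k w u x y" .
  then show ?thesis unfolding gamma_def avg_def F_def by (simp add: card_cartesian_product)
qed

lemma Gf_invariant:
  assumes "q0 permutes V"
  shows "Gf V k w u (q0 a) (q0 b) = Gf V k w u a b"
proof -
  let ?F = "\<lambda>a b q. \<Sum>r\<in>perms V. \<bar>Yf V k w u r - Yf V k w u (transpose (q a) (q b) \<circ> r)\<bar>"
  have "Gf V k w u a b = sum (?F a b) (perms V)" by (simp add: Gf_def)
  also have "\<dots> = (\<Sum>q\<in>perms V. ?F a b (q \<circ> q0))"
    unfolding perms_def by (rule sum_permutations_compose_right[OF assms])
  also have "\<dots> = Gf V k w u (q0 a) (q0 b)" by (simp add: Gf_def)
  finally show ?thesis by simp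
qed

lemma exists_perm_pair:
  assumes "c \<in> V" "d \<in> V" "x \<in> V" "y \<in> V" "c \<noteq> d" "x \<noteq> y"
  shows "\<exists>q0. q0 permutes V \<and> q0 c = x \<and> q0 d = y"
proof -
  define d' where "d' = transpose c x d"
  have d'V: "d' \<in> V" using assms by (auto simp: d'_def transpose_def)
  have d'x: "d' \<noteq> x" using assms by (auto simp: d'_def transpose_def)
  define q0 where "q0 = transpose d' y \<circ> transpose c x"
  have "q0 permutes V" unfolding q0_def
    by (rule permutes_compose) (use assms d'V in \<open>auto intro: permutes_swap_id\<close>)
  moreover have "q0 c = x" using d'x assms by (simp add: q0_def transpose_def)
  moreover have "q0 d = y" by (simp add: q0_def d'_def)
  ultimately show ?thesis by blast
qed



definition Rf :: "nat \<Rightarrow> (nat \<Rightarrow> bool) \<Rightarrow> nat \<Rightarrow> nat" where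
  "Rf m \<epsilon> z = (if 1 \<le> z \<and> z \<le> 2*m \<and> \<epsilon> ((z - 1) div 2) then (if odd z then z + 1 else z - 1) else z)"

lemma R_idx:
  assumes "1 \<le> z" "z \<le> 2*m"
  shows "1 \<le> Rf m \<epsilon> z \<and> Rf m \<epsilon> z \<le> 2*m \<and> (Rf m \<epsilon> z - 1) div 2 = (z - 1) div 2"
  using assms unfolding Rf_def by (cases "odd z") (auto; presburger)+

lemma R_invol: "Rf m \<epsilon> (Rf m \<epsilon> z) = z"
proof (cases "1 \<le> z \<and> z \<le> 2*m \<and> \<epsilon> ((z - 1) div 2)")
  case True
  then have i: "1 \<le> Rf m \<epsilon> z \<and> Rf m \<epsilon> z \<le> 2*m \<and> (Rf m \<epsilon> z - 1) div 2 = (z - 1) div 2"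
    using R_idx by blast
  show ?thesis
  proof (cases "odd z")
    case True
    with \<open>1 \<le> z \<and> z \<le> 2*m \<and> \<epsilon> ((z - 1) div 2)\<close> i show ?thesis
      unfolding Rf_def by (auto; presburger)
  next
    case False
    with \<open>1 \<le> z \<and> z \<le> 2*m \<and> \<epsilon> ((z - 1) div 2)\<close> i show ?thesis
      unfolding Rf_def by (auto; presburger)
  qed
next
  case False
  then have "Rf m \<epsilon> z = z" unfolding Rf_def by auto
  then show ?thesis by simp
qed

lemma R_perm:
  assumes "2 * m \<le> n"
  shows "Rf m \<epsilon> permutes {1..n}"
  unfolding permutes_def
proof (intro conjI allI impI)
  fix z :: nat assume "z \<notin> {1..n}"
  then show "Rf m \<epsilon> z = z" using assms by (auto simp: Rf_def)
next
  fix y :: nat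
  show "\<exists>!x. Rf m \<epsilon> x = y" by (metis R_invol)
qed

lemma R_local: "\<epsilon> ((z - 1) div 2) = \<epsilon>' ((z - 1) div 2) \<Longrightarrow> Rf m \<epsilon> z = Rf m \<epsilon>' z"
  by (simp add: Rf_def)

lemma R_flip:
  assumes j: "j < m"
  shows "Rf m (flip j \<epsilon>) = transpose (2*j+1) (2*j+2) \<circ> Rf m \<epsilon>"
proof
  fix z
  show "Rf m (flip j \<epsilon>) z = (transpose (2*j+1) (2*j+2) \<circ> Rf m \<epsilon>) z"
  proof (cases "1 \<le> z \<and> z \<le> 2*m")
    case False
    then have "z \<noteq> 2*j+1" "z \<noteq> 2*j+2" using j by auto
    moreover have "Rf m (flip j \<epsilon>) z = z" "Rf m \<epsilon> z = z" using False unfolding Rf_def by auto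
    ultimately show ?thesis by simp
  next
    case True
    show ?thesis
    proof (cases "(z - 1) div 2 = j")
      case idx: True
      then have "z = 2*j+1 \<or> z = 2*j+2" using True by presburger
      then show ?thesis
      proof
        assume z: "z = 2*j+1"
        show ?thesis using j by (cases "\<epsilon> j") (simp_all add: z Rf_def flip_def)
      next
        assume z: "z = 2*j+2"
        show ?thesis using j by (cases "\<epsilon> j") (simp_all add: z Rf_def flip_def)
      qed
    next
      case idx: False
      have e: "Rf m (flip j \<epsilon>) z = Rf m \<epsilon> z"
        by (rule R_local) (use idx in \<open>simp add: flip_def\<close>)
      have "1 \<le> Rf m \<epsilon> z \<and> Rf m \<epsilon> z \<le> 2*m \<and> (Rf m \<epsilon> z - 1) div 2 = (z - 1) div 2"
        using R_idx True by blast
      then have "Rf m \<epsilon> z \<noteq> 2*j+1" "Rf m \<epsilon> z \<noteq> 2*j+2" using idx by auto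
      then show ?thesis using e by simp
    qed
  qed
qed



lemma conj_transpose2:
  assumes "q permutes V"
  shows "transpose (q x) (q y) \<circ> q = q \<circ> transpose x y"
proof -
  have b: "bij q" using permutes_bij[OF assms] .
  show ?thesis
    using transpose_comp_eq[OF b, of "q x" "q y"] by (simp add: inv_f_f[OF bij_is_inj[OF b]])
qed

lemma finite_ksub: "finite V \<Longrightarrow> finite (ksubsets V k)"
  unfolding ksubsets_def by (rule finite_subset[of _ "Pow V"]) auto

lemma deg_f:
  assumes r: "r permutes V" and V: "finite V"
  shows "deg_le k (\<lambda>\<epsilon>. Yf V k w u (q \<circ> Rf m \<epsilon> \<circ> r))"
proof (rule deg_leI[where I="ksubsets V k" and J="\<lambda>e. (\<lambda>z. (z - 1) div 2) ` (r ` e)"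
      and g="\<lambda>e \<epsilon>. w ((q \<circ> Rf m \<epsilon> \<circ> r) ` e) * u e"])
  show "finite (ksubsets V k)" by (rule finite_ksub[OF V])
  show "\<forall>\<epsilon>. Yf V k w u (q \<circ> Rf m \<epsilon> \<circ> r) = (\<Sum>e\<in>ksubsets V k. w ((q \<circ> Rf m \<epsilon> \<circ> r) ` e) * u e)"
    by (simp add: Yf_def)
  show "\<forall>e\<in>ksubsets V k. finite ((\<lambda>z. (z - 1) div 2) ` (r ` e)) \<and>
      card ((\<lambda>z. (z - 1) div 2) ` (r ` e)) \<le> k \<and>
      (\<forall>\<epsilon> \<epsilon>'. (\<forall>j\<in>(\<lambda>z. (z - 1) div 2) ` (r ` e). \<epsilon> j = \<epsilon>' j) \<longrightarrow>
         w ((q \<circ> Rf m \<epsilon> \<circ> r) ` e) * u e = w ((q \<circ> Rf m \<epsilon>' \<circ> r) ` e) * u e)"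
  proof (intro ballI conjI allI impI)
    fix e assume e: "e \<in> ksubsets V k"
    then have fe: "finite e" using V by (auto simp: ksubsets_def intro: finite_subset)
    show "finite ((\<lambda>z. (z - 1) div 2) ` (r ` e))" using fe by simp
    have "card ((\<lambda>z. (z - 1) div 2) ` (r ` e)) \<le> card (r ` e)" by (rule card_image_le) (simp add: fe)
    also have "\<dots> \<le> card e" by (rule card_image_le[OF fe])
    also have "\<dots> = k" using e by (simp add: ksubsets_def)
    finally show "card ((\<lambda>z. (z - 1) div 2) ` (r ` e)) \<le> k" .
  next
    fix e and \<epsilon> \<epsilon>' :: "nat \<Rightarrow> bool"
    assume ag: "\<forall>j\<in>(\<lambda>z. (z - 1) div 2) ` (r ` e). \<epsilon> j = \<epsilon>' j"
    have "(q \<circ> Rf m \<epsilon> \<circ> r) ` e = (q \<circ> Rf m \<epsilon>' \<circ> r) ` e"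
    proof (rule image_cong[OF refl])
      fix z assume "z \<in> e"
      then have h: "\<epsilon> ((r z - 1) div 2) = \<epsilon>' ((r z - 1) div 2)" using ag by auto
      then show "(q \<circ> Rf m \<epsilon> \<circ> r) z = (q \<circ> Rf m \<epsilon>' \<circ> r) z" by (simp add: R_local[where \<epsilon>=\<epsilon> and \<epsilon>'=\<epsilon>' and z="r z", OF h])
    qed
    then show "w ((q \<circ> Rf m \<epsilon> \<circ> r) ` e) * u e = w ((q \<circ> Rf m \<epsilon>' \<circ> r) ` e) * u e" by simp
  qed
qed

lemma swap3:
  "(\<Sum>b\<in>B. \<Sum>c\<in>C. \<Sum>d\<in>D. h b c d) = (\<Sum>c\<in>C. \<Sum>d\<in>D. \<Sum>b\<in>B. h b c d)"
proof -
  have "(\<Sum>b\<in>B. \<Sum>c\<in>C. \<Sum>d\<in>D. h b c d) = (\<Sum>c\<in>C. \<Sum>b\<in>B. \<Sum>d\<in>D. h b c d)"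
    by (rule sum.swap)
  also have "\<dots> = (\<Sum>c\<in>C. \<Sum>d\<in>D. \<Sum>b\<in>B. h b c d)"
    by (rule sum.cong[OF refl]) (rule sum.swap)
  finally show ?thesis .
qed

lemma swap4:
  "(\<Sum>a\<in>A. \<Sum>b\<in>B. \<Sum>c\<in>C. \<Sum>d\<in>D. h a b c d) = (\<Sum>c\<in>C. \<Sum>d\<in>D. \<Sum>a\<in>A. \<Sum>b\<in>B. h a b c d)"
proof -
  have "(\<Sum>a\<in>A. \<Sum>b\<in>B. \<Sum>c\<in>C. \<Sum>d\<in>D. h a b c d) = (\<Sum>a\<in>A. \<Sum>c\<in>C. \<Sum>d\<in>D. \<Sum>b\<in>B. h a b c d)"
    by (rule sum.cong[OF refl]) (rule swap3)
  also have "\<dots> = (\<Sum>c\<in>C. \<Sum>d\<in>D. \<Sum>a\<in>A. \<Sum>b\<in>B. h a b c d)"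
    by (rule swap3)
  finally show ?thesis .
qed

lemma inner_G:
  assumes mn: "2 * m \<le> n" and j: "j < m"
  shows "(\<Sum>q\<in>perms {1..n}. \<Sum>r\<in>perms {1..n}.
            \<bar>Yf {1..n} k w u (q \<circ> Rf m \<epsilon> \<circ> r) - Yf {1..n} k w u (q \<circ> Rf m (flip j \<epsilon>) \<circ> r)\<bar>)
         = Gf {1..n} k w u (2*j+1) (2*j+2)"
  unfolding Gf_def
proof (rule sum.cong[OF refl])
  let ?V = "{1..n::nat}"
  let ?Y = "Yf ?V k w u"
  fix q assume "q \<in> perms ?V"
  then have qq: "q permutes ?V" by (simp add: perms_def)
  have pp: "q \<circ> Rf m \<epsilon> permutes ?V" by (rule permutes_compose[OF R_perm[OF mn] qq])
  have "(\<Sum>r\<in>perms ?V. \<bar>?Y (q \<circ> Rf m \<epsilon> \<circ> r) - ?Y (q \<circ> Rf m (flip j \<epsilon>) \<circ> r)\<bar>)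
      = (\<Sum>r\<in>perms ?V. \<bar>?Y ((q \<circ> Rf m \<epsilon>) \<circ> r) - ?Y (transpose (q (2*j+1)) (q (2*j+2)) \<circ> ((q \<circ> Rf m \<epsilon>) \<circ> r))\<bar>)"
  proof (rule sum.cong[OF refl])
    fix r :: "nat \<Rightarrow> nat"
    have c: "q \<circ> transpose (2*j+1) (2*j+2) = transpose (q (2*j+1)) (q (2*j+2)) \<circ> q"
      by (rule conj_transpose2[OF qq, symmetric])
    have "q \<circ> Rf m (flip j \<epsilon>) \<circ> r = (q \<circ> transpose (2*j+1) (2*j+2)) \<circ> Rf m \<epsilon> \<circ> r"
      by (simp only: R_flip[OF j] o_assoc)
    also have "\<dots> = transpose (q (2*j+1)) (q (2*j+2)) \<circ> ((q \<circ> Rf m \<epsilon>) \<circ> r)"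
      by (simp only: c o_assoc)
    finally have "q \<circ> Rf m (flip j \<epsilon>) \<circ> r = transpose (q (2*j+1)) (q (2*j+2)) \<circ> ((q \<circ> Rf m \<epsilon>) \<circ> r)" .
    then show "\<bar>?Y (q \<circ> Rf m \<epsilon> \<circ> r) - ?Y (q \<circ> Rf m (flip j \<epsilon>) \<circ> r)\<bar> =
      \<bar>?Y ((q \<circ> Rf m \<epsilon>) \<circ> r) - ?Y (transpose (q (2*j+1)) (q (2*j+2)) \<circ> ((q \<circ> Rf m \<epsilon>) \<circ> r))\<bar>"
      by simp
  qed
  also have "\<dots> = (\<Sum>r\<in>perms ?V. \<bar>?Y r - ?Y (transpose (q (2*j+1)) (q (2*j+2)) \<circ> r)\<bar>)"
    unfolding perms_def
    by (rule setum_permutations_compose_left[OF pp, symmetric, where f="\<lambda>r. \<bar>?Y r - ?Y (transpose (q (2*j+1)) (q (2*j+2)) \<circ> r)\<bar>"])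
  finally show "(\<Sum>r\<in>perms ?V. \<bar>?Y (q \<circ> Rf m \<epsilon> \<circ> r) - ?Y (q \<circ> Rf m (flip j \<epsilon>) \<circ> r)\<bar>)
      = (\<Sum>r\<in>perms ?V. \<bar>?Y r - ?Y (transpose (q (2*j+1)) (q (2*j+2)) \<circ> r)\<bar>)" .
qed

lemma G_pair:
  assumes mn: "2 * m \<le> n" and j: "j < m" and x: "x \<in> {1..n}" and y: "y \<in> {1..n}" and xy: "x \<noteq> y"
  shows "Gf {1..n} k w u (2*j+1) (2*j+2) = Gf {1..n} k w u x y"
proof -
  obtain q0 where q0: "q0 permutes {1..n}" "q0 (2*j+1) = x" "q0 (2*j+2) = y"
    using exists_perm_pair[of "2*j+1" "{1..n}" "2*j+2" x y] mn j x y xy by auto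
  show ?thesis using Gf_invariant[OF q0(1), of k w u "2*j+1" "2*j+2"] q0 by simp
qed

lemma lhs_sum:
  assumes mn: "2 * m \<le> n" and x: "x \<in> {1..n}" and y: "y \<in> {1..n}" and xy: "x \<noteq> y"
  shows "(\<Sum>q\<in>perms {1..n}. \<Sum>r\<in>perms {1..n}. \<Sum>j<m. \<Sum>\<epsilon>\<in>cube m.
            \<bar>Yf {1..n} k w u (q \<circ> Rf m \<epsilon> \<circ> r) - Yf {1..n} k w u (q \<circ> Rf m (flip j \<epsilon>) \<circ> r)\<bar>)
         = real m * 2 ^ m * Gf {1..n} k w u x y"
proof -
  have "(\<Sum>q\<in>perms {1..n}. \<Sum>r\<in>perms {1..n}. \<Sum>j<m. \<Sum>\<epsilon>\<in>cube m.
            \<bar>Yf {1..n} k w u (q \<circ> Rf m \<epsilon> \<circ> r) - Yf {1..n} k w u (q \<circ> Rf m (flip j \<epsilon>) \<circ> r)\<bar>)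
     = (\<Sum>j<m. \<Sum>\<epsilon>\<in>cube m. \<Sum>q\<in>perms {1..n}. \<Sum>r\<in>perms {1..n}.
            \<bar>Yf {1..n} k w u (q \<circ> Rf m \<epsilon> \<circ> r) - Yf {1..n} k w u (q \<circ> Rf m (flip j \<epsilon>) \<circ> r)\<bar>)"
    by (rule swap4)
  also have "\<dots> = (\<Sum>j<m. \<Sum>\<epsilon>\<in>cube m. Gf {1..n} k w u x y)"
  proof (rule sum.cong[OF refl], rule sum.cong[OF refl])
    fix j \<epsilon> assume "j \<in> {..<m}"
    then have j: "j < m" by simp
    have "(\<Sum>q\<in>perms {1..n}. \<Sum>r\<in>perms {1..n}.
            \<bar>Yf {1..n} k w u (q \<circ> Rf m \<epsilon> \<circ> r) - Yf {1..n} k w u (q \<circ> Rf m (flip j \<epsilon>) \<circ> r)\<bar>)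
         = Gf {1..n} k w u (2*j+1) (2*j+2)" by (rule inner_G[OF mn j])
    also have "\<dots> = Gf {1..n} k w u x y" by (rule G_pair[OF mn j x y xy])
    finally show "(\<Sum>q\<in>perms {1..n}. \<Sum>r\<in>perms {1..n}.
            \<bar>Yf {1..n} k w u (q \<circ> Rf m \<epsilon> \<circ> r) - Yf {1..n} k w u (q \<circ> Rf m (flip j \<epsilon>) \<circ> r)\<bar>)
         = Gf {1..n} k w u x y" .
  qed
  also have "\<dots> = real m * 2 ^ m * Gf {1..n} k w u x y"
    by (simp add: card_cube)
  finally show ?thesis .
qed

lemma rhs_sum:
  assumes mn: "2 * m \<le> n"
  shows "(\<Sum>q\<in>perms {1..n}. \<Sum>r\<in>perms {1..n}. \<Sum>\<epsilon>\<in>cube m. \<bar>Yf {1..n} k w u (q \<circ> Rf m \<epsilon> \<circ> r)\<bar>)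
         = 2 ^ m * real (card (perms {1..n})) * (\<Sum>r\<in>perms {1..n}. \<bar>Yf {1..n} k w u r\<bar>)"
proof -
  have "(\<Sum>q\<in>perms {1..n}. \<Sum>r\<in>perms {1..n}. \<Sum>\<epsilon>\<in>cube m. \<bar>Yf {1..n} k w u (q \<circ> Rf m \<epsilon> \<circ> r)\<bar>)
      = (\<Sum>q\<in>perms {1..n}. \<Sum>\<epsilon>\<in>cube m. \<Sum>r\<in>perms {1..n}. \<bar>Yf {1..n} k w u (q \<circ> Rf m \<epsilon> \<circ> r)\<bar>)"
    by (rule sum.cong[OF refl]) (rule sum.swap)
  also have "\<dots> = (\<Sum>q\<in>perms {1..n}. \<Sum>\<epsilon>\<in>cube m. \<Sum>r\<in>perms {1..n}. \<bar>Yf {1..n} k w u r\<bar>)"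
  proof (rule sum.cong[OF refl], rule sum.cong[OF refl])
    fix q \<epsilon> assume "q \<in> perms {1..n}"
    then have "q permutes {1..n}" by (simp add: perms_def)
    then have pp: "q \<circ> Rf m \<epsilon> permutes {1..n}"
      by (rule permutes_compose[OF R_perm[OF mn]])
    show "(\<Sum>r\<in>perms {1..n}. \<bar>Yf {1..n} k w u (q \<circ> Rf m \<epsilon> \<circ> r)\<bar>) = (\<Sum>r\<in>perms {1..n}. \<bar>Yf {1..n} k w u r\<bar>)"
      unfolding perms_def
      by (rule setum_permutations_compose_left[OF pp, symmetric, where f="\<lambda>r. \<bar>Yf {1..n} k w u r\<bar>"])
  qed
  also have "\<dots> = 2 ^ m * real (card (perms {1..n})) * (\<Sum>r\<in>perms {1..n}. \<bar>Yf {1..n} k w u r\<bar>)"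
    by (simp add: card_cube)
  finally show ?thesis .
qed



theorem lemma4p2:
  fixes k :: nat
  assumes "k \<ge> 1"
  shows "\<exists>c>0. \<forall>n::nat. \<forall>w u :: nat set \<Rightarrow> real. \<forall>x y.
           n \<ge> k \<longrightarrow> x \<in> {1..n} \<longrightarrow> y \<in> {1..n} \<longrightarrow> x \<noteq> y \<longrightarrow>
           avg (perms {1..n}) (\<lambda>p. \<bar>inner_k {1..n} k (perm_act p w) u\<bar>)
             \<ge> c * gamma {1..n} k x y w u * sqrt (real n)"
proof -
  define c where "c = 1 / (4 * 3 ^ k * sqrt (real k))"
  have kpos: "real k > 0" using assms by simp
  have cpos: "c > 0" unfolding c_def using kpos by simp
  show ?thesis
  proof (intro exI[of _ c] conjI allI impI)
    show "c > 0" by (rule cpos)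
  next
    fix n :: nat and w u :: "nat set \<Rightarrow> real" and x y :: nat
    assume nk: "n \<ge> k" and x: "x \<in> {1..n}" and y: "y \<in> {1..n}" and xy: "x \<noteq> y"
    define m where "m = n div 2"
    define P where "P = perms {1..n}"
    define Pc where "Pc = real (card P)"
    define Y where "Y = Yf {1..n} k w u"
    define SY where "SY = (\<Sum>r\<in>P. \<bar>Y r\<bar>)"
    define G where "G = Gf {1..n} k w u x y"
    define C where "C = sqrt (4 * real k * real m * 9 ^ k)"
    have n2: "n \<ge> 2" using x y xy by auto
    have mn: "2 * m \<le> n" by (simp add: m_def)
    have m1: "m \<ge> 1" using n2 by (simp add: m_def)
    have n4m: "real n \<le> 4 * real m" using n2 by (simp add: m_def)
    have Pcpos: "Pc > 0"
      unfolding Pc_def P_def perms_def using card_permutations[of "{1..n}" n] by simp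
    have SYp: "SY \<ge> 0" by (simp add: SY_def sum_nonneg)
    have Gp: "G \<ge> 0" by (simp add: G_def Gf_def sum_nonneg)
    have Cp: "C \<ge> 0" by (simp add: C_def)
    have each: "(\<Sum>j<m. \<Sum>\<epsilon>\<in>cube m. \<bar>Y (q \<circ> Rf m \<epsilon> \<circ> r) - Y (q \<circ> Rf m (flip j \<epsilon>) \<circ> r)\<bar>)
        \<le> C * (\<Sum>\<epsilon>\<in>cube m. \<bar>Y (q \<circ> Rf m \<epsilon> \<circ> r)\<bar>)" if r: "r \<in> P" for q r
    proof -
      have "r permutes {1..n}" using r by (simp add: P_def perms_def)
      then have "deg_le k (\<lambda>\<epsilon>. Yf {1..n} k w u (q \<circ> Rf m \<epsilon> \<circ> r))"
        by (rule deg_f) simp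
      from L1_bound[OF this, of m] show ?thesis by (simp add: Y_def C_def)
    qed
    have "real m * 2 ^ m * G = (\<Sum>q\<in>P. \<Sum>r\<in>P. \<Sum>j<m. \<Sum>\<epsilon>\<in>cube m. \<bar>Y (q \<circ> Rf m \<epsilon> \<circ> r) - Y (q \<circ> Rf m (flip j \<epsilon>) \<circ> r)\<bar>)"
      unfolding G_def P_def Y_def by (rule lhs_sum[OF mn x y xy, symmetric])
    also have "\<dots> \<le> (\<Sum>q\<in>P. \<Sum>r\<in>P. C * (\<Sum>\<epsilon>\<in>cube m. \<bar>Y (q \<circ> Rf m \<epsilon> \<circ> r)\<bar>))"
      by (intro sum_mono each)
    also have "\<dots> = C * (\<Sum>q\<in>P. \<Sum>r\<in>P. \<Sum>\<epsilon>\<in>cube m. \<bar>Y (q \<circ> Rf m \<epsilon> \<circ> r)\<bar>)"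
      by (simp add: sum_distrib_left)
    also have "(\<Sum>q\<in>P. \<Sum>r\<in>P. \<Sum>\<epsilon>\<in>cube m. \<bar>Y (q \<circ> Rf m \<epsilon> \<circ> r)\<bar>) = 2 ^ m * Pc * SY"
      unfolding P_def Y_def Pc_def SY_def by (rule rhs_sum[OF mn])
    finally have H0: "2 ^ m * (real m * G) \<le> 2 ^ m * (C * Pc * SY)" by (simp add: algebra_simps)
    then have H: "real m * G \<le> C * Pc * SY" by simp
    have A: "sqrt (real n) * C \<le> 4 * 3 ^ k * sqrt (real k) * real m"
    proof -
      have "sqrt (real n) * C = sqrt (real n * (4 * real k * real m * 9 ^ k))"
        by (simp add: C_def real_sqrt_mult)
      also have "\<dots> \<le> sqrt ((4 * 3 ^ k * sqrt (real k) * real m) ^ 2)"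
      proof (rule real_sqrt_le_mono)
        have t9: "(3::real) ^ (k * 2) = 9 ^ k" by (subst mult.commute) (simp add: power_mult)
        have sq: "(4 * 3 ^ k * sqrt (real k) * real m) ^ 2 = 16 * 9 ^ k * real k * real m * real m"
          using kpos t9 by (simp add: power_mult_distrib power2_eq_square[of "real m"] power_mult[symmetric] mult.commute)
        have ineq: "real n * (4 * real k * real m * 9 ^ k) \<le> (4 * real m) * (4 * real k * real m * 9 ^ k)"
          by (rule mult_right_mono[OF n4m]) simp
        show "real n * (4 * real k * real m * 9 ^ k) \<le> (4 * 3 ^ k * sqrt (real k) * real m) ^ 2"
          unfolding sq using ineq by (simp add: algebra_simps)
      qed
      also have "\<dots> = 4 * 3 ^ k * sqrt (real k) * real m" by simp
      finally show ?thesis .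
    qed
    have "c * sqrt (real n) * C \<le> real m"
    proof -
      have "c * sqrt (real n) * C = (sqrt (real n) * C) / (4 * 3 ^ k * sqrt (real k))"
        by (simp add: c_def)
      also have "\<dots> \<le> (4 * 3 ^ k * sqrt (real k) * real m) / (4 * 3 ^ k * sqrt (real k))"
        by (rule divide_right_mono[OF A]) simp
      also have "\<dots> = real m" using kpos by simp
      finally show ?thesis .
    qed
    have key: "c * sqrt (real n) * G \<le> Pc * SY"
    proof -
      have "real m * (c * sqrt (real n) * G) = (c * sqrt (real n)) * (real m * G)" by simp
      also have "\<dots> \<le> (c * sqrt (real n)) * (C * Pc * SY)"
        by (rule mult_left_mono[OF H]) (use cpos in simp)
      also have "\<dots> = (c * sqrt (real n) * C) * (Pc * SY)" by simp
      also have "\<dots> \<le> real m * (Pc * SY)"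
        by (rule mult_right_mono[OF \<open>c * sqrt (real n) * C \<le> real m\<close>]) (use Pcpos SYp in simp)
      finally have "real m * (c * sqrt (real n) * G) \<le> real m * (Pc * SY)" .
      then show ?thesis using m1 by simp
    qed
    have lhs: "avg (perms {1..n}) (\<lambda>p. \<bar>inner_k {1..n} k (perm_act p w) u\<bar>) = SY / Pc"
      unfolding avg_def using avg_lhs[of "{1..n}" k w u] by (simp add: SY_def Pc_def P_def Y_def)
    have gam: "gamma {1..n} k x y w u = G / (Pc * Pc)"
      unfolding G_def Pc_def P_def by (rule gamma_eq[OF x y])
    have "c * gamma {1..n} k x y w u * sqrt (real n) = (c * sqrt (real n) * G) / (Pc * Pc)"
      unfolding gam by simp
    also have "\<dots> \<le> (Pc * SY) / (Pc * Pc)"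
      by (rule divide_right_mono[OF key]) simp
    also have "\<dots> = SY / Pc" using Pcpos by simp
    finally show "c * gamma {1..n} k x y w u * sqrt (real n)
        \<le> avg (perms {1..n}) (\<lambda>p. \<bar>inner_k {1..n} k (perm_act p w) u\<bar>)"
      unfolding lhs .
  qed
qed

end
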